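(* Let $\mathfrak{g}=\mathfrak{gl}(p,q)$, $k\ge1$, and let all $X_i\in\mathfrak g$ be homogeneous. Then: (a) $P_{2k+1}(X_1,\ldots,X_{2k+1})=(2k+1)\,B(\mathcal P_{2k}(X_1,\ldots,X_{2k})\mid X_{2k+1})$; $\Lambda_{2k}(X_1,\ldots,X_{2k})=0$; and $\Lambda_{2k+1}(X_1,\ldots,X_{2k+1})=(2k+1)\,B(\mathcal A_{2k}(X_1,\ldots,X_{2k})\mid X_{2k+1})$. (b) $\displaystyle\sum_{\sigma\in\mathfrak S_{2k}}\epsilon(\sigma)\epsilon(\sigma,\mathcal X)[X_{\sigma(1)},X_{\sigma(2)}]\cdots[X_{\sigma(2k-1)},X_{\sigma(2k)}]=2^k\mathcal A_{2k}(X_1,\ldots,X_{2k})$. (c) For each $j$ with $0\le j\le k$, $\displaystyle\sum_{\sigma\in\mathfrak S_{2k+1}}\epsilon(\sigma)\epsilon(\sigma,\mathcal X)[X_{\sigma(1)},X_{\sigma(2)}]\cdots[X_{\sigma(2j-1)},X_{\sigma(2j)}]\,X_{\sigma(2j+1)}\,[X_{\sigma(2j+2)},X_{\sigma(2j+3)}]\cdots[X_{\sigma(2k)},X_{\sigma(2k+1)}]=2^k\mathcal A_{2k+1}(X_1,\ldots,X_{2k+1})$.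
   Context: $\mathfrak{gl}(p,q)=\mathrm{End}(V)$ for a $\mathbb Z_2$-graded complex vector space $V=V_{\bar0}\oplus V_{\bar1}$ with $\dim V_{\bar0}=p$, $\dim V_{\bar1}=q$; homogeneous elements have degrees denoted by lower-case letters, products are compositions, and $[X,Y]=XY-(-1)^{xy}YX$. The super trace is $\mathrm{str}\begin{pmatrix}a&b\\c&d\end{pmatrix}=\mathrm{tr}(a)-\mathrm{tr}(d)$ and $B(Z\mid T)=\mathrm{str}(ZT)$. For $\mathcal X=(X_1,\dots,X_m)$ and $\sigma\in\mathfrak S_m$, $\epsilon(\sigma)$ is the sign of $\sigma$ and $\epsilon(\sigma,\mathcal X)=(-1)^K$ with $K$ the number of pairs $i<j$ such that $\sigma(i)>\sigma(j)$ and $X_{\sigma(i)},X_{\sigma(j)}$ are both odd. Define $\mathcal P_m(X_1,\dots,X_m)=\sum_{\sigma\in\mathfrak S_m}\epsilon(\sigma,\mathcal X)X_{\sigma(1)}\cdots X_{\sigma(m)}$, $\mathcal A_m(X_1,\dots,X_m)=\sum_{\sigma}\epsilon(\sigma)\epsilon(\sigma,\mathcal X)X_{\sigma(1)}\cdots X_{\sigma(m)}$, $P_m=\mathrm{str}\circ\mathcal P_m$, $\Lambda_m=\mathrm{str}\circ\mathcal A_m$. In (c), for $j=0$ there are no brackets before $X_{\sigma(1)}$ and for $j=k$ none after $X_{\sigma(2k+1)}$. *)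

theory Defs
  imports Complex_Main "HOL-Combinatorics.Permutations"
begin

text \<open>Endomorphisms of V = V0 (+) V1, dim V0 = p, dim V1 = q, are represented as
(p+q) x (p+q) complex matrices (functions nat => nat => complex vanishing outside the
index range {0..<p+q}). Basis indices 0..<p span the even part, p..<p+q the odd part.\<close>

type_synonym cmat = "nat \<Rightarrow> nat \<Rightarrow> complex"

definition mmul :: "nat \<Rightarrow> cmat \<Rightarrow> cmat \<Rightarrow> cmat" where
  "mmul n A B = (\<lambda>i j. \<Sum>l<n. A i l * B l j)"

definition mone :: "nat \<Rightarrow> cmat" where
  "mone n = (\<lambda>i j. if i = j \<and> i < n then 1 else 0)"

definition mlprod :: "nat \<Rightarrow> cmat list \<Rightarrow> cmat" where
  "mlprod n Ms = foldr (mmul n) Ms (mone n)"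

definition msub :: "cmat \<Rightarrow> cmat \<Rightarrow> cmat" where
  "msub A B = (\<lambda>i j. A i j - B i j)"

definition msmul :: "complex \<Rightarrow> cmat \<Rightarrow> cmat" where
  "msmul c A = (\<lambda>i j. c * A i j)"

definition msum :: "'a set \<Rightarrow> ('a \<Rightarrow> cmat) \<Rightarrow> cmat" where
  "msum S f = (\<lambda>i j. \<Sum>s\<in>S. f s i j)"

definition in_gl :: "nat \<Rightarrow> nat \<Rightarrow> cmat \<Rightarrow> bool" where
  "in_gl p q A \<longleftrightarrow> (\<forall>i j. (p + q \<le> i \<or> p + q \<le> j) \<longrightarrow> A i j = 0)"

definition idx_odd :: "nat \<Rightarrow> nat \<Rightarrow> bool" where
  "idx_odd p i \<longleftrightarrow> p \<le> i"

text \<open>A is homogeneous of degree d (d = True means odd).\<close>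
definition homog :: "nat \<Rightarrow> nat \<Rightarrow> bool \<Rightarrow> cmat \<Rightarrow> bool" where
  "homog p q d A \<longleftrightarrow> in_gl p q A \<and>
     (\<forall>i j. A i j \<noteq> 0 \<longrightarrow> (idx_odd p i \<noteq> idx_odd p j) = d)"

definition str :: "nat \<Rightarrow> nat \<Rightarrow> cmat \<Rightarrow> complex" where
  "str p q A = (\<Sum>i<p. A i i) - (\<Sum>i\<in>{p..<p+q}. A i i)"

definition Bform :: "nat \<Rightarrow> nat \<Rightarrow> cmat \<Rightarrow> cmat \<Rightarrow> complex" where
  "Bform p q Z T = str p q (mmul (p + q) Z T)"

definition sbr :: "nat \<Rightarrow> bool \<Rightarrow> bool \<Rightarrow> cmat \<Rightarrow> cmat \<Rightarrow> cmat" where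
  "sbr n dx dy X Y = msub (mmul n X Y) (msmul (if dx \<and> dy then -1 else 1) (mmul n Y X))"

text \<open>epsilon(sigma, X) for sigma a permutation of {0..<m}; d i is the degree of X_i.\<close>
definition eps_par :: "(nat \<Rightarrow> bool) \<Rightarrow> nat \<Rightarrow> (nat \<Rightarrow> nat) \<Rightarrow> complex" where
  "eps_par d m \<sigma> = (-1) ^ card {(i, j). i < j \<and> j < m \<and> \<sigma> j < \<sigma> i \<and> d (\<sigma> i) \<and> d (\<sigma> j)}"

definition calP :: "nat \<Rightarrow> nat \<Rightarrow> (nat \<Rightarrow> bool) \<Rightarrow> (nat \<Rightarrow> cmat) \<Rightarrow> nat \<Rightarrow> cmat" where
  "calP p q d X m = msum {\<sigma>. \<sigma> permutes {..<m}}
     (\<lambda>\<sigma>. msmul (eps_par d m \<sigma>) (mlprod (p + q) (map (\<lambda>i. X (\<sigma> i)) [0..<m])))"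

definition calA :: "nat \<Rightarrow> nat \<Rightarrow> (nat \<Rightarrow> bool) \<Rightarrow> (nat \<Rightarrow> cmat) \<Rightarrow> nat \<Rightarrow> cmat" where
  "calA p q d X m = msum {\<sigma>. \<sigma> permutes {..<m}}
     (\<lambda>\<sigma>. msmul (of_int (sign \<sigma>) * eps_par d m \<sigma>) (mlprod (p + q) (map (\<lambda>i. X (\<sigma> i)) [0..<m])))"

definition Pm :: "nat \<Rightarrow> nat \<Rightarrow> (nat \<Rightarrow> bool) \<Rightarrow> (nat \<Rightarrow> cmat) \<Rightarrow> nat \<Rightarrow> complex" where
  "Pm p q d X m = str p q (calP p q d X m)"

definition Lam :: "nat \<Rightarrow> nat \<Rightarrow> (nat \<Rightarrow> bool) \<Rightarrow> (nat \<Rightarrow> cmat) \<Rightarrow> nat \<Rightarrow> complex" where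
  "Lam p q d X m = str p q (calA p q d X m)"

definition brk :: "nat \<Rightarrow> (nat \<Rightarrow> bool) \<Rightarrow> (nat \<Rightarrow> cmat) \<Rightarrow> (nat \<Rightarrow> nat) \<Rightarrow> nat \<Rightarrow> cmat" where
  "brk n d X \<sigma> a = sbr n (d (\<sigma> a)) (d (\<sigma> (Suc a))) (X (\<sigma> a)) (X (\<sigma> (Suc a)))"

definition lhsB :: "nat \<Rightarrow> nat \<Rightarrow> (nat \<Rightarrow> bool) \<Rightarrow> (nat \<Rightarrow> cmat) \<Rightarrow> nat \<Rightarrow> cmat" where
  "lhsB p q d X k = msum {\<sigma>. \<sigma> permutes {..<2*k}}
     (\<lambda>\<sigma>. msmul (of_int (sign \<sigma>) * eps_par d (2*k) \<sigma>)
        (mlprod (p + q) (map (\<lambda>i. brk (p + q) d X \<sigma> (2*i)) [0..<k])))"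

definition lhsC :: "nat \<Rightarrow> nat \<Rightarrow> (nat \<Rightarrow> bool) \<Rightarrow> (nat \<Rightarrow> cmat) \<Rightarrow> nat \<Rightarrow> nat \<Rightarrow> cmat" where
  "lhsC p q d X k j = msum {\<sigma>. \<sigma> permutes {..<2*k+1}}
     (\<lambda>\<sigma>. msmul (of_int (sign \<sigma>) * eps_par d (2*k+1) \<sigma>)
        (mlprod (p + q)
          (map (\<lambda>i. brk (p + q) d X \<sigma> (2*i)) [0..<j]
           @ [X (\<sigma> (2*j))]
           @ map (\<lambda>i. brk (p + q) d X \<sigma> (2*j + 1 + 2*i)) [0..<k-j])))"

end

theory Submission
  imports Defs
begin


lemma mmul_assoc: "mmul n (mmul n A B) C = mmul n A (mmul n B C)"
  unfolding mmul_def
  by (auto simp: fun_eq_iff sum_distrib_left sum_distrib_right mult.assoc intro: sum.swap)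

lemma mmul_mone_right: "in_gl p q A \<Longrightarrow> mmul (p+q) A (mone (p+q)) = A"
  unfolding mmul_def mone_def in_gl_def
  by (auto simp: fun_eq_iff if_distrib[where f="\<lambda>x. _ * x"] cong: if_cong)

lemma mmul_mone_left: "in_gl p q A \<Longrightarrow> mmul (p+q) (mone (p+q)) A = A"
  unfolding mmul_def mone_def in_gl_def
proof (intro ext)
  fix i j assume h: "\<forall>i j. p + q \<le> i \<or> p + q \<le> j \<longrightarrow> A i j = 0"
  show "(\<Sum>l<p + q. (if i = l \<and> i < p + q then 1 else 0) * A l j) = A i j"
  proof (cases "i < p+q")
    case True then show ?thesis by (simp add: if_distrib[where f="\<lambda>x. x * _"] sum.delta cong: if_cong)
  next
    case False then show ?thesis using h by simp
  qed
qed

lemma mlprod_Cons: "mlprod n (x # xs) = mmul n x (mlprod n xs)"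
  by (simp add: mlprod_def)

lemma mlprod_snoc: "in_gl p q x \<Longrightarrow> mlprod (p+q) (xs @ [x]) = mmul (p+q) (mlprod (p+q) xs) x"
proof (induction xs)
  case Nil
  then show ?case by (simp add: mlprod_def mmul_mone_right mmul_mone_left)
next
  case (Cons y ys)
  then show ?case by (simp add: mlprod_Cons mmul_assoc)
qed

lemma homog_in_gl: "homog p q d A \<Longrightarrow> in_gl p q A" by (simp add: homog_def)

lemma homog_mone: "homog p q False (mone (p+q))"
  unfolding homog_def in_gl_def mone_def by auto

lemma homog_mmul:
  assumes "homog p q a A" "homog p q b B"
  shows "homog p q (a \<noteq> b) (mmul (p+q) A B)"
  unfolding homog_def
proof (intro conjI allI impI)
  show "in_gl p q (mmul (p + q) A B)"
    using assms unfolding homog_def in_gl_def mmul_def by auto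
next
  fix i j assume "mmul (p + q) A B i j \<noteq> 0"
  then obtain l where "A i l * B l j \<noteq> 0" unfolding mmul_def
    by (meson sum.neutral)
  then have "A i l \<noteq> 0" "B l j \<noteq> 0" by auto
  with assms show "(idx_odd p i \<noteq> idx_odd p j) = (a \<noteq> b)"
    unfolding homog_def by blast
qed

lemma homog_mlprod:
  "(\<And>x. x \<in> set L \<Longrightarrow> homog p q (D x) (Y x)) \<Longrightarrow>
   homog p q (odd (length (filter D L))) (mlprod (p+q) (map Y L))"
proof (induction L)
  case Nil
  then show ?case by (simp add: mlprod_def homog_mone)
next
  case (Cons a L)
  then have "homog p q (D a \<noteq> odd (length (filter D L))) (mmul (p+q) (Y a) (mlprod (p+q) (map Y L)))"
    by (intro homog_mmul) auto
  then have "homog p q (D a \<noteq> odd (length (filter D L))) (mlprod (p+q) (map Y (a # L)))"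
    by (simp add: mlprod_Cons)
  then show ?case by (cases "D a") auto
qed

lemma str_alt: "str p q A = (\<Sum>i<p+q. (if i < p then 1 else -1) * A i i)"
proof -
  have "(\<Sum>i<p+q. (if i < p then 1 else -1) * A i i) =
        (\<Sum>i<p. (if i < p then 1 else -1) * A i i) + (\<Sum>i\<in>{p..<p+q}. (if i < p then 1 else -1) * A i i)"
  proof -
    have e: "{..<p+q} = {..<p} \<union> {p..<p+q}" by auto
    show ?thesis by (subst e, rule sum.union_disjoint) auto
  qed
  also have "\<dots> = (\<Sum>i<p. A i i) - (\<Sum>i\<in>{p..<p+q}. A i i)"
    by (simp add: sum_negf)
  finally show ?thesis by (simp add: str_def)
qed

lemma str_swap:
  assumes "homog p q a A" "homog p q b B"
  shows "str p q (mmul (p+q) A B) = (if a \<and> b then -1 else 1) * str p q (mmul (p+q) B A)"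
proof -
  let ?s = "\<lambda>i::nat. (if i < p then 1 else -1::complex)"
  have "str p q (mmul (p+q) A B) = (\<Sum>i<p+q. \<Sum>l<p+q. ?s i * (A i l * B l i))"
    by (simp add: str_alt mmul_def sum_distrib_left)
  also have "\<dots> = (\<Sum>i<p+q. \<Sum>l<p+q. (if a \<and> b then -1 else 1) * (?s l * (B l i * A i l)))"
  proof (intro sum.cong refl)
    fix i l assume "i \<in> {..<p+q}" "l \<in> {..<p+q}"
    show "?s i * (A i l * B l i) = (if a \<and> b then -1 else 1) * (?s l * (B l i * A i l))"
    proof (cases "A i l = 0 \<or> B l i = 0")
      case True then show ?thesis by auto
    next
      case False
      then have "(idx_odd p i \<noteq> idx_odd p l) = a" "(idx_odd p l \<noteq> idx_odd p i) = b"
        using assms unfolding homog_def by auto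
      then show ?thesis unfolding idx_odd_def by (auto simp: not_less)
    qed
  qed
  also have "\<dots> = (if a \<and> b then -1 else 1) * (\<Sum>l<p+q. \<Sum>i<p+q. ?s l * (B l i * A i l))"
    by (subst sum.swap) (simp add: sum_distrib_left)
  also have "\<dots> = (if a \<and> b then -1 else 1) * str p q (mmul (p+q) B A)"
    by (simp add: str_alt mmul_def sum_distrib_left)
  finally show ?thesis .
qed



definition fpair :: "(nat \<Rightarrow> bool) \<Rightarrow> nat \<Rightarrow> nat \<Rightarrow> complex" where
  "fpair d u v = (if v < u \<and> d u \<and> d v then -1 else 1)"

definition PS :: "nat \<Rightarrow> (nat \<times> nat) set" where
  "PS m = {(i, j). i < j \<and> j < m}"

lemma finite_PS: "finite (PS m)"
  by (rule finite_subset[of _ "{..<m} \<times> {..<m}"]) (auto simp: PS_def)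

lemma eps_prod: "eps_par d m \<sigma> = (\<Prod>x\<in>PS m. fpair d (\<sigma> (fst x)) (\<sigma> (snd x)))"
proof -
  have e: "{(i, j). i < j \<and> j < m \<and> \<sigma> j < \<sigma> i \<and> d (\<sigma> i) \<and> d (\<sigma> j)}
     = {x \<in> PS m. \<sigma> (snd x) < \<sigma> (fst x) \<and> d (\<sigma> (fst x)) \<and> d (\<sigma> (snd x))}"
    by (auto simp: PS_def)
  have "eps_par d m \<sigma> = (\<Prod>x\<in>{x \<in> PS m. \<sigma> (snd x) < \<sigma> (fst x) \<and> d (\<sigma> (fst x)) \<and> d (\<sigma> (snd x))}. (-1::complex))"
    unfolding eps_par_def e by simp
  also have "\<dots> = (\<Prod>x\<in>PS m. fpair d (\<sigma> (fst x)) (\<sigma> (snd x)))"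
    by (subst prod.inter_filter[OF finite_PS]) (simp add: fpair_def)
  finally show ?thesis .
qed

lemma fpair_swap: "u \<noteq> v \<Longrightarrow> fpair d u v = fpair d v u * (if d u \<and> d v then -1 else 1)"
  unfolding fpair_def by auto

lemma eps_cocycle:
  assumes s: "\<sigma> permutes {..<m}" and r: "\<rho> permutes {..<m}"
  shows "eps_par d m (\<sigma> \<circ> \<rho>) = eps_par d m \<sigma> * eps_par (d \<circ> \<sigma>) m \<rho>"
proof -
  define \<Phi> where "\<Phi> = (\<lambda>x::nat\<times>nat. (min (\<rho> (fst x)) (\<rho> (snd x)), max (\<rho> (fst x)) (\<rho> (snd x))))"
  define \<Psi> where "\<Psi> = (\<lambda>x::nat\<times>nat. (min (inv \<rho> (fst x)) (inv \<rho> (snd x)), max (inv \<rho> (fst x)) (inv \<rho> (snd x))))"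
  have ri: "\<And>x. \<rho> (inv \<rho> x) = x" "\<And>x. inv \<rho> (\<rho> x) = x" using permutes_inverses[OF r] by auto
  have rin: "\<And>x. \<rho> x < m \<longleftrightarrow> x < m" using permutes_in_image[OF r] by auto
  have ir: "inv \<rho> permutes {..<m}" using permutes_inv[OF r] .
  have irin: "\<And>x. inv \<rho> x < m \<longleftrightarrow> x < m" using permutes_in_image[OF ir] by auto
  have rinj: "\<And>x y. \<rho> x = \<rho> y \<longleftrightarrow> x = y" by (metis ri(2))
  have irinj: "\<And>x y. inv \<rho> x = inv \<rho> y \<longleftrightarrow> x = y" by (metis ri(1))
  have sinj: "\<And>x y. \<sigma> x = \<sigma> y \<longleftrightarrow> x = y" using permutes_inj[OF s] by (auto simp: inj_eq)
  have bij: "bij_betw \<Phi> (PS m) (PS m)"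
  proof (rule bij_betw_byWitness[where f'=\<Psi>])
    show "\<forall>a\<in>PS m. \<Psi> (\<Phi> a) = a"
      unfolding PS_def \<Phi>_def \<Psi>_def by (auto simp: ri min_def max_def)
    show "\<forall>a\<in>PS m. \<Phi> (\<Psi> a) = a"
      unfolding PS_def \<Phi>_def \<Psi>_def by (auto simp: ri min_def max_def)
    show "\<Phi> ` PS m \<subseteq> PS m"
      unfolding PS_def \<Phi>_def using rinj rin by (auto simp: min_def max_def) (metis le_less less_irrefl)+
    show "\<Psi> ` PS m \<subseteq> PS m"
      unfolding PS_def \<Psi>_def using irinj irin by (auto simp: min_def max_def) (metis le_less less_irrefl)+
  qed
  have "eps_par d m (\<sigma> \<circ> \<rho>) = (\<Prod>x\<in>PS m. fpair d (\<sigma> (\<rho> (fst x))) (\<sigma> (\<rho> (snd x))))"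
    by (simp add: eps_prod)
  also have "\<dots> = (\<Prod>x\<in>PS m. fpair d (\<sigma> (fst (\<Phi> x))) (\<sigma> (snd (\<Phi> x))) * fpair (d \<circ> \<sigma>) (\<rho> (fst x)) (\<rho> (snd x)))"
  proof (rule prod.cong[OF refl])
    fix x assume "x \<in> PS m"
    then have ne: "\<rho> (fst x) \<noteq> \<rho> (snd x)" unfolding PS_def using rinj by auto
    show "fpair d (\<sigma> (\<rho> (fst x))) (\<sigma> (\<rho> (snd x))) =
          fpair d (\<sigma> (fst (\<Phi> x))) (\<sigma> (snd (\<Phi> x))) * fpair (d \<circ> \<sigma>) (\<rho> (fst x)) (\<rho> (snd x))"
    proof (cases "\<rho> (fst x) < \<rho> (snd x)")
      case True then show ?thesis unfolding \<Phi>_def by (simp add: fpair_def)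
    next
      case False
      then have lt: "\<rho> (snd x) < \<rho> (fst x)" using ne by auto
      have "fpair d (\<sigma> (\<rho> (fst x))) (\<sigma> (\<rho> (snd x))) = fpair d (\<sigma> (\<rho> (snd x))) (\<sigma> (\<rho> (fst x))) *
          (if d (\<sigma> (\<rho> (fst x))) \<and> d (\<sigma> (\<rho> (snd x))) then -1 else 1)"
        by (rule fpair_swap) (use ne sinj in auto)
      then show ?thesis using lt unfolding \<Phi>_def by (simp add: fpair_def min_def max_def)
    qed
  qed
  also have "\<dots> = (\<Prod>x\<in>PS m. fpair d (\<sigma> (fst (\<Phi> x))) (\<sigma> (snd (\<Phi> x)))) * eps_par (d \<circ> \<sigma>) m \<rho>"
    by (simp add: prod.distrib eps_prod)
  also have "(\<Prod>x\<in>PS m. fpair d (\<sigma> (fst (\<Phi> x))) (\<sigma> (snd (\<Phi> x)))) = eps_par d m \<sigma>"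
    using prod.reindex_bij_betw[OF bij, of "\<lambda>x. fpair d (\<sigma> (fst x)) (\<sigma> (snd x))"]
    by (simp add: eps_prod)
  finally show ?thesis .
qed



lemma eps_transp:
  assumes "Suc a < m"
  shows "eps_par D m (transpose a (Suc a)) = (if D a \<and> D (Suc a) then -1 else 1)"
proof -
  have "{(i, j). i < j \<and> j < m \<and> transpose a (Suc a) j < transpose a (Suc a) i \<and>
      D (transpose a (Suc a) i) \<and> D (transpose a (Suc a) j)} = (if D a \<and> D (Suc a) then {(a, Suc a)} else {})"
    using assms by (auto simp: transpose_def split: if_splits)
  then show ?thesis unfolding eps_par_def by simp
qed

definition rot :: "nat \<Rightarrow> nat \<Rightarrow> nat" where
  "rot m i = (if i < m then (if Suc i = m then 0 else Suc i) else i)"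

lemma rot_permutes: "rot m permutes {..<m}"
proof (rule bij_imp_permutes)
  show "bij_betw (rot m) {..<m} {..<m}"
    by (rule bij_betw_byWitness[where f'="\<lambda>i. if i = 0 then m - 1 else i - 1"])
       (auto simp: rot_def)
  show "\<And>x. x \<notin> {..<m} \<Longrightarrow> rot m x = x" by (auto simp: rot_def)
qed

lemma rot_Suc: "1 \<le> m \<Longrightarrow> rot (Suc m) = rot m \<circ> transpose (m - 1) m"
  by (auto simp: fun_eq_iff rot_def transpose_def)

lemma sign_rot: "1 \<le> m \<Longrightarrow> sign (rot m) = (-1) ^ (m - 1)"
proof (induction m rule: nat_induct_at_least)
  case base
  have "rot 1 = id" by (auto simp: fun_eq_iff rot_def)
  then show ?case by simp
next
  case (Suc m)
  have "sign (rot (Suc m)) = sign (rot m) * sign (transpose (m - 1) m)"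
    unfolding rot_Suc[OF Suc.hyps]
    by (rule sign_compose) (auto intro: permutes_imp_permutation[OF _ rot_permutes] permutation_swap_id)
  also have "\<dots> = (-1) ^ (Suc m - 1)" using Suc by (cases m) (simp_all add: sign_swap_id)
  finally show ?case .
qed

lemma eps_rot:
  assumes "1 \<le> m"
  shows "eps_par D m (rot m) = (-1) ^ (if D 0 then length (filter D [1..<m]) else 0)"
proof -
  have e: "{(i, j). i < j \<and> j < m \<and> rot m j < rot m i \<and> D (rot m i) \<and> D (rot m j)}
    = (if D 0 then (\<lambda>i. (i, m - 1)) ` {i. i < m - 1 \<and> D (Suc i)} else {})"
    using assms by (auto simp: rot_def split: if_splits)
  have c: "card {i. i < m - 1 \<and> D (Suc i)} = length (filter D [1..<m])"
  proof -
    have "[1..<m] = map Suc [0..<m-1]" using assms by (simp add: map_Suc_upt)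
    then have "length (filter D [1..<m]) = length (filter (D \<circ> Suc) [0..<m-1])"
      by (simp add: filter_map)
    also have "\<dots> = card {i. i < m - 1 \<and> D (Suc i)}"
      by (simp add: distinct_length_filter Int_def conj_commute)
    finally show ?thesis by simp
  qed
  show ?thesis unfolding eps_par_def e
    using c by (simp add: card_image inj_on_def)
qed

lemma rot_funpow_permutes: "(rot m ^^ e) permutes {..<m}"
proof (induction e)
  case 0 then show ?case using permutes_id by (simp add: id_def)
next
  case (Suc e)
  show ?case unfolding funpow_Suc_right by (rule permutes_compose[OF rot_permutes Suc.IH])
qed

lemma rot_funpow_last: "p < m \<Longrightarrow> (rot m ^^ Suc p) (m - 1) = p"
  by (induction p) (auto simp: rot_def)



lemma str_msum: "str p q (msum S (\<lambda>s. msmul (c s) (M s))) = (\<Sum>s\<in>S. c s * str p q (M s))"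
  unfolding str_def msum_def msmul_def
  by (simp add: sum_distrib_left sum.swap[of _ S "{..<p}"] sum.swap[of _ S "{p..<p+q}"] right_diff_distrib sum_subtractf)

lemma mmul_msum: "mmul n (msum S (\<lambda>s. msmul (c s) (M s))) B = msum S (\<lambda>s. msmul (c s) (mmul n (M s) B))"
  unfolding mmul_def msum_def msmul_def
  by (auto simp: fun_eq_iff sum_distrib_left sum_distrib_right mult.assoc intro: sum.swap)

definition wd :: "nat \<Rightarrow> (nat \<Rightarrow> cmat) \<Rightarrow> (nat \<Rightarrow> nat) \<Rightarrow> nat \<Rightarrow> cmat" where
  "wd n X \<sigma> m = mlprod n (map (\<lambda>i. X (\<sigma> i)) [0..<m])"

lemma rot_term:
  assumes m: "1 \<le> m" and s: "\<sigma> permutes {..<m}"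
    and h: "\<And>i. i < m \<Longrightarrow> homog p q (d i) (X i)"
  shows "eps_par d m (\<sigma> \<circ> rot m) * str p q (wd (p+q) X (\<sigma> \<circ> rot m) m)
       = eps_par d m \<sigma> * str p q (wd (p+q) X \<sigma> m)"
proof -
  have sin: "\<And>i. i < m \<Longrightarrow> \<sigma> i < m" using permutes_in_image[OF s] by auto
  define A where "A = X (\<sigma> 0)"
  define B where "B = mlprod (p+q) (map (\<lambda>i. X (\<sigma> i)) [1..<m])"
  define N where "N = length (filter (d \<circ> \<sigma>) [1..<m])"
  have hA: "homog p q (d (\<sigma> 0)) A" unfolding A_def using h sin m by auto
  have hB: "homog p q (odd N) B" unfolding B_def N_def
    using homog_mlprod[of "[1..<m]" p q "d \<circ> \<sigma>" "X \<circ> \<sigma>"] h sin by (auto simp: o_def)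
  have w1: "wd (p+q) X \<sigma> m = mmul (p+q) A B"
    unfolding wd_def A_def B_def using m by (simp add: upt_conv_Cons mlprod_Cons)
  have "map (\<lambda>i. X (\<sigma> (rot m i))) [0..<m] = map (\<lambda>i. X (\<sigma> (rot m i))) ([0..<m-1] @ [m-1])"
    using m by (metis Suc_diff_1 less_le_trans zero_less_one upt_Suc_append zero_le)
  also have "\<dots> = map (\<lambda>i. X (\<sigma> (Suc i))) [0..<m-1] @ [A]"
    unfolding A_def using m by (auto simp: rot_def)
  also have "map (\<lambda>i. X (\<sigma> (Suc i))) [0..<m-1] = map (\<lambda>i. X (\<sigma> i)) [1..<m]"
  proof -
    have ms: "[1..<m] = map Suc [0..<m-1]" using m by (simp add: map_Suc_upt)
    show ?thesis by (simp only: ms map_map o_def)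
  qed
  finally have w2: "wd (p+q) X (\<sigma> \<circ> rot m) m = mmul (p+q) B A"
    unfolding wd_def B_def using mlprod_snoc[OF homog_in_gl[OF hA]] by simp
  have e: "eps_par d m (\<sigma> \<circ> rot m) = eps_par d m \<sigma> * (-1) ^ (if d (\<sigma> 0) then N else 0)"
    unfolding eps_cocycle[OF s rot_permutes] eps_rot[OF m] N_def by simp
  have sw: "str p q (mmul (p+q) A B) = (if d (\<sigma> 0) \<and> odd N then -1 else 1) * str p q (mmul (p+q) B A)"
    by (rule str_swap[OF hA hB])
  have pw: "(-1::complex) ^ (if d (\<sigma> 0) then N else 0) = (if d (\<sigma> 0) \<and> odd N then -1 else 1)"
    by (cases "d (\<sigma> 0)") auto
  show ?thesis unfolding w1 w2 e sw pw by simp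
qed

lemma rot_term_sign:
  assumes m: "1 \<le> m" and s: "\<sigma> permutes {..<m}"
    and h: "\<And>i. i < m \<Longrightarrow> homog p q (d i) (X i)"
  shows "of_int (sign (\<sigma> \<circ> rot m)) * eps_par d m (\<sigma> \<circ> rot m) * str p q (wd (p+q) X (\<sigma> \<circ> rot m) m)
       = (-1) ^ (m - 1) * (of_int (sign \<sigma>) * eps_par d m \<sigma> * str p q (wd (p+q) X \<sigma> m))"
proof -
  have "sign (\<sigma> \<circ> rot m) = sign \<sigma> * (-1) ^ (m - 1)"
    using sign_compose[OF permutes_imp_permutation[OF _ s] permutes_imp_permutation[OF _ rot_permutes]]
      sign_rot[OF m] by simp
  then show ?thesis using rot_term[OF m s h] by (simp add: mult.assoc mult.left_commute)
qed

lemma rot_funpow_inv: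
  assumes "\<And>\<sigma>. \<sigma> permutes {..<m} \<Longrightarrow> T (\<sigma> \<circ> rot m) = T \<sigma>"
  shows "\<sigma> permutes {..<m} \<Longrightarrow> T (\<sigma> \<circ> (rot m ^^ e)) = T \<sigma>"
proof (induction e arbitrary: \<sigma>)
  case 0 then show ?case by simp
next
  case (Suc e)
  have "T (\<sigma> \<circ> (rot m ^^ Suc e)) = T ((\<sigma> \<circ> rot m) \<circ> (rot m ^^ e))" by (simp only: funpow.simps(2) o_assoc)
  also have "\<dots> = T (\<sigma> \<circ> rot m)"
    by (rule Suc.IH) (rule permutes_compose[OF rot_permutes Suc.prems])
  also have "\<dots> = T \<sigma>" using assms Suc.prems by simp
  finally show ?case .
qed

lemma perm_fix_last:
  fixes m :: nat
  assumes "1 \<le> m"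
  shows "{\<sigma>. \<sigma> permutes {..<m} \<and> \<sigma> (m - 1) = m - 1} = {\<sigma>. \<sigma> permutes {..<m - 1}}"
proof (intro set_eqI iffI)
  fix \<sigma> assume "\<sigma> \<in> {\<sigma>. \<sigma> permutes {..<m - 1}}"
  then have s: "\<sigma> permutes {..<m - 1}" by simp
  have "{..<m - 1} \<subseteq> {..<m}" by auto
  then have "\<sigma> permutes {..<m}" using permutes_subset[OF s] by blast
  moreover have "\<sigma> (m - 1) = m - 1" using permutes_not_in[OF s] by simp
  ultimately show "\<sigma> \<in> {\<sigma>. \<sigma> permutes {..<m} \<and> \<sigma> (m - 1) = m - 1}" by simp
next
  fix \<sigma> assume "\<sigma> \<in> {\<sigma>. \<sigma> permutes {..<m} \<and> \<sigma> (m - 1) = m - 1}"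
  then have s: "\<sigma> permutes {..<m}" and f: "\<sigma> (m - 1) = m - 1" by auto
  have "\<forall>x. x \<notin> {..<m - 1} \<longrightarrow> \<sigma> x = x"
  proof (intro allI impI)
    fix x :: nat assume "x \<notin> {..<m - 1}"
    then have "x = m - 1 \<or> x \<notin> {..<m}" by auto
    then show "\<sigma> x = x" using f permutes_not_in[OF s] by auto
  qed
  moreover have "\<forall>y. \<exists>!x. \<sigma> x = y" using s unfolding permutes_def by blast
  ultimately show "\<sigma> \<in> {\<sigma>. \<sigma> permutes {..<m - 1}}" unfolding permutes_def by blast
qed

lemma fiber_sum:
  assumes m: "1 \<le> m" and inv: "\<And>\<sigma>. \<sigma> permutes {..<m} \<Longrightarrow> T (\<sigma> \<circ> rot m) = T \<sigma>"
  shows "(\<Sum>\<sigma>\<in>{\<sigma>. \<sigma> permutes {..<m}}. T \<sigma>) = of_nat m * (\<Sum>\<sigma>\<in>{\<sigma>. \<sigma> permutes {..<m - 1}}. (T \<sigma> :: complex))"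
proof -
  let ?S = "{\<sigma>. \<sigma> permutes {..<m}}"
  have fin: "finite ?S" by (rule finite_permutations) simp
  have "(\<Sum>\<sigma>\<in>?S. T \<sigma>) = (\<Sum>\<sigma>\<in>?S. \<Sum>p<m. if \<sigma> p = m - 1 then T \<sigma> else 0)"
  proof (rule sum.cong[OF refl])
    fix \<sigma> assume "\<sigma> \<in> ?S"
    then have s: "\<sigma> permutes {..<m}" by simp
    have eq: "\<And>p. \<sigma> p = m - 1 \<longleftrightarrow> p = inv \<sigma> (m - 1)" using permutes_inv_eq[OF s] by metis
    have "inv \<sigma> (m - 1) < m" using permutes_in_image[OF permutes_inv[OF s], of "m - 1"] m by simp
    then show "T \<sigma> = (\<Sum>p<m. if \<sigma> p = m - 1 then T \<sigma> else 0)"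
      unfolding eq by (simp add: sum.delta')
  qed
  also have "\<dots> = (\<Sum>p<m. \<Sum>\<sigma>\<in>?S. if \<sigma> p = m - 1 then T \<sigma> else 0)"
    by (rule sum.swap)
  also have "\<dots> = (\<Sum>p<m. \<Sum>\<sigma>\<in>?S. if \<sigma> (m - 1) = m - 1 then T \<sigma> else 0)"
  proof (rule sum.cong[OF refl])
    fix p assume "p \<in> {..<m}"
    then have p: "p < m" by simp
    let ?R = "rot m ^^ Suc p"
    have "(\<Sum>\<sigma>\<in>?S. if \<sigma> (m - 1) = m - 1 then T \<sigma> else 0) =
          (\<Sum>\<sigma>\<in>?S. if (\<sigma> \<circ> ?R) (m - 1) = m - 1 then T (\<sigma> \<circ> ?R) else 0)"
      by (rule sum_permutations_compose_right[OF rot_funpow_permutes])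
    also have "\<dots> = (\<Sum>\<sigma>\<in>?S. if \<sigma> p = m - 1 then T \<sigma> else 0)"
    proof (rule sum.cong[OF refl])
      fix \<sigma> assume "\<sigma> \<in> ?S"
      then have s: "\<sigma> permutes {..<m}" by simp
      have a: "(\<sigma> \<circ> ?R) (m - 1) = \<sigma> p" by (simp only: o_apply rot_funpow_last[OF p])
      have b: "T (\<sigma> \<circ> ?R) = T \<sigma>" by (rule rot_funpow_inv[where T=T and m=m, OF inv s])
      show "(if (\<sigma> \<circ> ?R) (m - 1) = m - 1 then T (\<sigma> \<circ> ?R) else 0) = (if \<sigma> p = m - 1 then T \<sigma> else 0)"
        by (simp only: a b)
    qed
    finally show "(\<Sum>\<sigma>\<in>?S. if \<sigma> p = m - 1 then T \<sigma> else 0) =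
          (\<Sum>\<sigma>\<in>?S. if \<sigma> (m - 1) = m - 1 then T \<sigma> else 0)" by simp
  qed
  also have "\<dots> = of_nat m * (\<Sum>\<sigma>\<in>?S. if \<sigma> (m - 1) = m - 1 then T \<sigma> else 0)" by simp
  also have "(\<Sum>\<sigma>\<in>?S. if \<sigma> (m - 1) = m - 1 then T \<sigma> else 0) = (\<Sum>\<sigma>\<in>{\<sigma>\<in>?S. \<sigma> (m - 1) = m - 1}. T \<sigma>)"
    by (rule sum.inter_filter[OF fin, symmetric])
  also have "{\<sigma>\<in>?S. \<sigma> (m - 1) = m - 1} = {\<sigma>. \<sigma> permutes {..<m - 1}}"
    using perm_fix_last[OF m] by simp
  finally show ?thesis .
qed

lemma eps_extend:
  assumes s: "\<tau> permutes {..<m}"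
  shows "eps_par d (Suc m) \<tau> = eps_par d m \<tau>"
proof -
  have "\<And>i. i < m \<Longrightarrow> \<tau> i < m" using permutes_in_image[OF s] by auto
  moreover have "\<tau> m = m" using permutes_not_in[OF s] by simp
  ultimately have "{(i, j). i < j \<and> j < Suc m \<and> \<tau> j < \<tau> i \<and> d (\<tau> i) \<and> d (\<tau> j)}
     = {(i, j). i < j \<and> j < m \<and> \<tau> j < \<tau> i \<and> d (\<tau> i) \<and> d (\<tau> j)}"
    by (auto simp: less_Suc_eq) (metis less_asym less_trans)+
  then show ?thesis unfolding eps_par_def by simp
qed

lemma wd_extend:
  assumes s: "\<tau> permutes {..<m}" and h: "in_gl p q (X m)"
  shows "wd (p+q) X \<tau> (Suc m) = mmul (p+q) (wd (p+q) X \<tau> m) (X m)"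
proof -
  have "\<tau> m = m" using permutes_not_in[OF s] by simp
  then show ?thesis unfolding wd_def using mlprod_snoc[OF h] by simp
qed



fun bval :: "nat \<Rightarrow> (nat \<Rightarrow> bool) \<Rightarrow> (nat \<Rightarrow> cmat) \<Rightarrow> (nat \<Rightarrow> nat) \<Rightarrow> nat + nat \<Rightarrow> cmat" where
  "bval n d X \<sigma> (Inl a) = X (\<sigma> a)"
| "bval n d X \<sigma> (Inr a) = brk n d X \<sigma> a"

fun poss :: "(nat + nat) list \<Rightarrow> nat list" where
  "poss [] = []"
| "poss (Inl a # bs) = a # poss bs"
| "poss (Inr a # bs) = a # Suc a # poss bs"

fun expd :: "(nat + nat) list \<Rightarrow> (nat + nat) list" where
  "expd [] = []"
| "expd (Inl a # bs) = Inl a # expd bs"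
| "expd (Inr a # bs) = Inl a # Inl (Suc a) # expd bs"

fun nbr :: "(nat + nat) list \<Rightarrow> nat" where
  "nbr [] = 0"
| "nbr (Inl a # bs) = nbr bs"
| "nbr (Inr a # bs) = Suc (nbr bs)"

lemma poss_append[simp]: "poss (xs @ ys) = poss xs @ poss ys"
  by (induction xs rule: poss.induct) auto
lemma expd_append[simp]: "expd (xs @ ys) = expd xs @ expd ys"
  by (induction xs rule: expd.induct) auto
lemma nbr_append[simp]: "nbr (xs @ ys) = nbr xs + nbr ys"
  by (induction xs rule: nbr.induct) auto
lemma poss_expd[simp]: "poss (expd bs) = poss bs"
  by (induction bs rule: expd.induct) auto
lemma poss_Inl[simp]: "poss (map Inl L) = L"
  by (induction L) auto

lemma bval_transp:
  "a \<notin> set (poss L) \<Longrightarrow> Suc a \<notin> set (poss L) \<Longrightarrow>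
   map (bval n d X (\<sigma> \<circ> transpose a (Suc a))) L = map (bval n d X \<sigma>) L"
  by (induction L rule: poss.induct) (auto simp: brk_def transpose_def)

lemma mmul_lin: "mmul n x (msub A (msmul s B)) = msub (mmul n x A) (msmul s (mmul n x B))"
  unfolding mmul_def msub_def msmul_def
  by (auto simp: fun_eq_iff sum_distrib_left right_diff_distrib sum_subtractf mult.left_commute)

lemma foldr_lin: "foldr (mmul n) xs (msub A (msmul s B)) = msub (foldr (mmul n) xs A) (msmul s (foldr (mmul n) xs B))"
  by (induction xs) (auto simp: mmul_lin)

lemma mmul_lin_left: "mmul n (msub A (msmul s B)) M = msub (mmul n A M) (msmul s (mmul n B M))"
  unfolding mmul_def msub_def msmul_def
  by (auto simp: fun_eq_iff sum_distrib_left left_diff_distrib sum_subtractf mult.assoc)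

lemma mlprod_brk:
  "mlprod n (xs @ sbr n a b A B # ys) =
   msub (mlprod n (xs @ A # B # ys)) (msmul (if a \<and> b then -1 else 1) (mlprod n (xs @ B # A # ys)))"
  unfolding mlprod_def sbr_def
  by (simp add: foldr_lin[symmetric] mmul_lin_left mmul_assoc)

definition SS :: "nat \<Rightarrow> nat \<Rightarrow> (nat \<Rightarrow> bool) \<Rightarrow> (nat \<Rightarrow> cmat) \<Rightarrow> nat \<Rightarrow> (nat + nat) list \<Rightarrow> cmat" where
  "SS p q d X m bs = msum {\<sigma>. \<sigma> permutes {..<m}}
     (\<lambda>\<sigma>. msmul (of_int (sign \<sigma>) * eps_par d m \<sigma>) (mlprod (p + q) (map (bval (p+q) d X \<sigma>) bs)))"

lemma SS_step:
  assumes dist: "distinct (poss (pre @ Inr a # post))" and rng: "set (poss (pre @ Inr a # post)) \<subseteq> {..<m}"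
  shows "SS p q d X m (pre @ Inr a # post) = msmul 2 (SS p q d X m (pre @ Inl a # Inl (Suc a) # post))"
proof -
  let ?n = "p + q"
  let ?S = "{\<sigma>. \<sigma> permutes {..<m}}"
  let ?t = "transpose a (Suc a)"
  have am: "Suc a < m" using rng by auto
  have npre: "a \<notin> set (poss pre)" "Suc a \<notin> set (poss pre)" using dist by auto
  have npost: "a \<notin> set (poss post)" "Suc a \<notin> set (poss post)" using dist by auto
  have tp: "?t permutes {..<m}" using am by (intro permutes_swap_id) auto
  define c where "c = (\<lambda>\<sigma>. of_int (sign \<sigma>) * eps_par d m \<sigma> :: complex)"
  define s where "s = (\<lambda>\<sigma>::nat\<Rightarrow>nat. if d (\<sigma> a) \<and> d (\<sigma> (Suc a)) then -1 else (1::complex))"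
  define W where "W = (\<lambda>\<sigma>. mlprod ?n (map (bval ?n d X \<sigma>) (pre @ Inl a # Inl (Suc a) # post)))"
  have ct: "c (\<sigma> \<circ> ?t) = - s \<sigma> * c \<sigma>" if "\<sigma> \<in> ?S" for \<sigma>
  proof -
    have sp: "\<sigma> permutes {..<m}" using that by simp
    have "sign (\<sigma> \<circ> ?t) = - sign \<sigma>"
      using sign_compose[OF permutes_imp_permutation[OF _ sp] permutes_imp_permutation[OF _ tp]]
      by (simp add: sign_swap_id)
    moreover have "eps_par d m (\<sigma> \<circ> ?t) = eps_par d m \<sigma> * s \<sigma>"
      unfolding eps_cocycle[OF sp tp] eps_transp[OF am] s_def by simp
    ultimately show ?thesis unfolding c_def by simp
  qed
  have wt: "mlprod ?n (map (bval ?n d X \<sigma>) (pre @ Inr a # post)) = msub (W \<sigma>) (msmul (s \<sigma>) (W (\<sigma> \<circ> ?t)))" for \<sigma>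
  proof -
    have e1: "map (bval ?n d X (\<sigma> \<circ> ?t)) pre = map (bval ?n d X \<sigma>) pre" by (rule bval_transp[OF npre])
    have e2: "map (bval ?n d X (\<sigma> \<circ> ?t)) post = map (bval ?n d X \<sigma>) post" by (rule bval_transp[OF npost])
    have m2: "W (\<sigma> \<circ> ?t) = mlprod ?n (map (bval ?n d X \<sigma>) pre @ X (\<sigma> (Suc a)) # X (\<sigma> a) # map (bval ?n d X \<sigma>) post)"
      unfolding W_def by (simp add: e1 e2)
    show ?thesis unfolding m2 unfolding W_def s_def by (simp add: brk_def mlprod_brk)
  qed
  have ss2: "s \<sigma> * s \<sigma> = 1" for \<sigma> unfolding s_def by simp
  show ?thesis
  proof (rule ext, rule ext)
    fix i j
    have "SS p q d X m (pre @ Inr a # post) i j = (\<Sum>\<sigma>\<in>?S. c \<sigma> * (W \<sigma> i j - s \<sigma> * W (\<sigma> \<circ> ?t) i j))"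
      unfolding SS_def msum_def msmul_def c_def wt by (simp add: msub_def msmul_def)
    also have "\<dots> = (\<Sum>\<sigma>\<in>?S. c \<sigma> * W \<sigma> i j) + (\<Sum>\<sigma>\<in>?S. c (\<sigma> \<circ> ?t) * W (\<sigma> \<circ> ?t) i j)"
    proof -
      have "\<And>\<sigma>. \<sigma> \<in> ?S \<Longrightarrow> c \<sigma> * (W \<sigma> i j - s \<sigma> * W (\<sigma> \<circ> ?t) i j) = c \<sigma> * W \<sigma> i j + c (\<sigma> \<circ> ?t) * W (\<sigma> \<circ> ?t) i j"
      proof -
        fix \<sigma> assume "\<sigma> \<in> ?S"
        then have "c (\<sigma> \<circ> ?t) = - s \<sigma> * c \<sigma>" by (rule ct)
        then show "c \<sigma> * (W \<sigma> i j - s \<sigma> * W (\<sigma> \<circ> ?t) i j) = c \<sigma> * W \<sigma> i j + c (\<sigma> \<circ> ?t) * W (\<sigma> \<circ> ?t) i j"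
          by (simp add: algebra_simps)
      qed
      then show ?thesis by (simp add: sum.distrib)
    qed
    also have "(\<Sum>\<sigma>\<in>?S. c (\<sigma> \<circ> ?t) * W (\<sigma> \<circ> ?t) i j) = (\<Sum>\<sigma>\<in>?S. c \<sigma> * W \<sigma> i j)"
      by (rule sum_permutations_compose_right[OF tp, symmetric])
    also have "(\<Sum>\<sigma>\<in>?S. c \<sigma> * W \<sigma> i j) + (\<Sum>\<sigma>\<in>?S. c \<sigma> * W \<sigma> i j) = msmul 2 (SS p q d X m (pre @ Inl a # Inl (Suc a) # post)) i j"
      unfolding SS_def msum_def msmul_def c_def W_def by (simp add: sum_distrib_left)
    finally show "SS p q d X m (pre @ Inr a # post) i j = msmul 2 (SS p q d X m (pre @ Inl a # Inl (Suc a) # post)) i j" .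
  qed
qed

lemma msmul_msmul: "msmul a (msmul b M) = msmul (a * b) M"
  by (simp add: msmul_def fun_eq_iff mult.assoc)

lemma SS_expand:
  "distinct (poss (pre @ bs)) \<Longrightarrow> set (poss (pre @ bs)) \<subseteq> {..<m} \<Longrightarrow>
   SS p q d X m (pre @ bs) = msmul (2 ^ nbr bs) (SS p q d X m (pre @ expd bs))"
proof (induction bs arbitrary: pre rule: nbr.induct)
  case 1
  then show ?case by (simp add: msmul_def)
next
  case (2 a bs)
  have "SS p q d X m ((pre @ [Inl a]) @ bs) = msmul (2 ^ nbr bs) (SS p q d X m ((pre @ [Inl a]) @ expd bs))"
    by (rule 2(1)) (use 2(2,3) in auto)
  then show ?case by simp
next
  case (3 a bs)
  have "SS p q d X m (pre @ Inr a # bs) = msmul 2 (SS p q d X m (pre @ Inl a # Inl (Suc a) # bs))"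
    by (rule SS_step) (use 3(2,3) in auto)
  also have "SS p q d X m ((pre @ [Inl a, Inl (Suc a)]) @ bs) = msmul (2 ^ nbr bs) (SS p q d X m ((pre @ [Inl a, Inl (Suc a)]) @ expd bs))"
    by (rule 3(1)) (use 3(2,3) in auto)
  ultimately show ?case by (simp add: msmul_msmul)
qed

lemma expd_Inr: "expd (map (\<lambda>i. Inr (b + 2 * i)) [0..<n]) = map Inl [b..<b + 2 * n]"
  by (induction n) (auto simp: numeral_2_eq_2)

lemma nbr_Inr: "nbr (map (\<lambda>i. Inr (b + 2 * i)) [0..<n]) = n"
  by (induction n) auto

lemma poss_Inr: "poss (map (\<lambda>i. Inr (b + 2 * i)) [0..<n]) = [b..<b + 2 * n]"
  using poss_expd[of "map (\<lambda>i. Inr (b + 2 * i)) [0..<n]"] by (simp add: expd_Inr)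



lemma partP:
  assumes h: "\<And>i. i < Suc m \<Longrightarrow> homog p q (d i) (X i)"
  shows "Pm p q d X (Suc m) = of_nat (Suc m) * Bform p q (calP p q d X m) (X m)"
proof -
  let ?T = "\<lambda>\<sigma>. eps_par d (Suc m) \<sigma> * str p q (wd (p+q) X \<sigma> (Suc m))"
  have "Pm p q d X (Suc m) = (\<Sum>\<sigma>\<in>{\<sigma>. \<sigma> permutes {..<Suc m}}. ?T \<sigma>)"
    unfolding Pm_def calP_def str_msum wd_def ..
  also have "\<dots> = of_nat (Suc m) * (\<Sum>\<sigma>\<in>{\<sigma>. \<sigma> permutes {..<Suc m - 1}}. ?T \<sigma>)"
    by (rule fiber_sum) (auto intro: rot_term h)
  also have "(\<Sum>\<sigma>\<in>{\<sigma>. \<sigma> permutes {..<Suc m - 1}}. ?T \<sigma>) =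
      (\<Sum>\<sigma>\<in>{\<sigma>. \<sigma> permutes {..<m}}. eps_par d m \<sigma> * str p q (mmul (p+q) (wd (p+q) X \<sigma> m) (X m)))"
  proof (rule sum.cong)
    fix \<sigma> assume "\<sigma> \<in> {\<sigma>. \<sigma> permutes {..<m}}"
    then have s: "\<sigma> permutes {..<m}" by simp
    have hm: "homog p q (d m) (X m)" using h by simp
    show "?T \<sigma> = eps_par d m \<sigma> * str p q (mmul (p+q) (wd (p+q) X \<sigma> m) (X m))"
      using eps_extend[OF s] wd_extend[where X=X and p=p and q=q, OF s homog_in_gl[OF hm]] by simp
  qed simp
  also have "\<dots> = Bform p q (calP p q d X m) (X m)"
    unfolding Bform_def calP_def mmul_msum str_msum wd_def ..
  finally show ?thesis .
qed

lemma partL: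
  assumes h: "\<And>i. i < Suc m \<Longrightarrow> homog p q (d i) (X i)" and ev: "even m"
  shows "Lam p q d X (Suc m) = of_nat (Suc m) * Bform p q (calA p q d X m) (X m)"
proof -
  let ?T = "\<lambda>\<sigma>. of_int (sign \<sigma>) * eps_par d (Suc m) \<sigma> * str p q (wd (p+q) X \<sigma> (Suc m))"
  have "Lam p q d X (Suc m) = (\<Sum>\<sigma>\<in>{\<sigma>. \<sigma> permutes {..<Suc m}}. ?T \<sigma>)"
    unfolding Lam_def calA_def str_msum wd_def ..
  also have "\<dots> = of_nat (Suc m) * (\<Sum>\<sigma>\<in>{\<sigma>. \<sigma> permutes {..<Suc m - 1}}. ?T \<sigma>)"
  proof (rule fiber_sum)
    fix \<sigma> assume "\<sigma> permutes {..<Suc m}"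
    from rot_term_sign[OF _ this h] ev show "?T (\<sigma> \<circ> rot (Suc m)) = ?T \<sigma>" by simp
  qed simp
  also have "(\<Sum>\<sigma>\<in>{\<sigma>. \<sigma> permutes {..<Suc m - 1}}. ?T \<sigma>) =
      (\<Sum>\<sigma>\<in>{\<sigma>. \<sigma> permutes {..<m}}. of_int (sign \<sigma>) * eps_par d m \<sigma> * str p q (mmul (p+q) (wd (p+q) X \<sigma> m) (X m)))"
  proof (rule sum.cong)
    fix \<sigma> assume "\<sigma> \<in> {\<sigma>. \<sigma> permutes {..<m}}"
    then have s: "\<sigma> permutes {..<m}" by simp
    have hm: "homog p q (d m) (X m)" using h by simp
    show "?T \<sigma> = of_int (sign \<sigma>) * eps_par d m \<sigma> * str p q (mmul (p+q) (wd (p+q) X \<sigma> m) (X m))"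
      using eps_extend[OF s] wd_extend[where X=X and p=p and q=q, OF s homog_in_gl[OF hm]] by simp
  qed simp
  also have "\<dots> = Bform p q (calA p q d X m) (X m)"
    unfolding Bform_def calA_def mmul_msum str_msum wd_def ..
  finally show ?thesis .
qed

lemma partL0:
  assumes h: "\<And>i. i < m \<Longrightarrow> homog p q (d i) (X i)" and ev: "even m" and m: "1 \<le> m"
  shows "Lam p q d X m = 0"
proof -
  let ?S = "{\<sigma>. \<sigma> permutes {..<m}}"
  let ?T = "\<lambda>\<sigma>. of_int (sign \<sigma>) * eps_par d m \<sigma> * str p q (wd (p+q) X \<sigma> m)"
  have "Lam p q d X m = (\<Sum>\<sigma>\<in>?S. ?T \<sigma>)"
    unfolding Lam_def calA_def str_msum wd_def ..
  also have "\<dots> = (\<Sum>\<sigma>\<in>?S. ?T (\<sigma> \<circ> rot m))"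
    by (rule sum_permutations_compose_right[OF rot_permutes])
  also have "\<dots> = (\<Sum>\<sigma>\<in>?S. - ?T \<sigma>)"
  proof (rule sum.cong[OF refl])
    fix \<sigma> assume "\<sigma> \<in> ?S"
    then have s: "\<sigma> permutes {..<m}" by simp
    have "odd (m - 1)" using ev m by simp
    then show "?T (\<sigma> \<circ> rot m) = - ?T \<sigma>" using rot_term_sign[OF m s h] by simp
  qed
  also have "\<dots> = - (\<Sum>\<sigma>\<in>?S. ?T \<sigma>)" by (simp add: sum_negf)
  finally have "Lam p q d X m = - Lam p q d X m"
    unfolding Lam_def calA_def str_msum wd_def .
  then show ?thesis by simp
qed

lemma SS_calA: "SS p q d X m (map Inl [0..<m]) = calA p q d X m"
  unfolding SS_def calA_def by (simp add: o_def)

lemma partB: "lhsB p q d X k = msmul (2^k) (calA p q d X (2*k))"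
proof -
  have "lhsB p q d X k = SS p q d X (2*k) ([] @ map (\<lambda>i. Inr (0 + 2 * i)) [0..<k])"
    unfolding lhsB_def SS_def by (simp add: o_def)
  also have "\<dots> = msmul (2 ^ k) (SS p q d X (2*k) ([] @ map Inl [0..<2*k]))"
  proof -
    have a: "poss (map (\<lambda>i. Inr (2 * i)) [0..<k]) = [0..<2*k]" using poss_Inr[of 0 k] by simp
    have b: "expd (map (\<lambda>i. Inr (2 * i)) [0..<k]) = map Inl [0..<2*k]" using expd_Inr[of 0 k] by simp
    have c: "nbr (map (\<lambda>i. Inr (2 * i)) [0..<k]) = k" using nbr_Inr[of 0 k] by simp
    show ?thesis using SS_expand[of "[]" "map (\<lambda>i. Inr (0 + 2 * i)) [0..<k]" "2*k" p q d X] a b c by (simp add: atLeast0LessThan subset_eq)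
  qed
  finally show ?thesis by (simp add: SS_calA)
qed

lemma partC:
  shows "lhsC p q d X (j + r) j = msmul (2^(j+r)) (calA p q d X (2*(j+r)+1))"
proof -
  define bs where "bs = map (\<lambda>i. Inr (2 * i)) [0..<j] @ Inl (2*j) # map (\<lambda>i. Inr ((2*j+1) + 2 * i)) [0..<r]"
  have L: "[0..<2*j] @ 2*j # [2*j+1..<(2*j+1) + 2*r] = [0..<2*(j+r)+1]"
  proof -
    have e: "2*(j+r)+1 = (2*j+1) + 2*r" by simp
    have "[0..<(2*j+1) + 2*r] = [0..<2*j+1] @ [2*j+1..<(2*j+1) + 2*r]"
      by (rule upt_add_eq_append) simp
    then show ?thesis unfolding e by simp
  qed
  have a: "poss (map (\<lambda>i. Inr (2 * i)) [0..<j]) = [0..<2*j]" using poss_Inr[of 0 j] by simp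
  have b: "expd (map (\<lambda>i. Inr (2 * i)) [0..<j]) = map Inl [0..<2*j]" using expd_Inr[of 0 j] by simp
  have c: "nbr (map (\<lambda>i. Inr (2 * i)) [0..<j]) = j" using nbr_Inr[of 0 j] by simp
  have pb: "poss bs = [0..<2*(j+r)+1]" unfolding bs_def using L a poss_Inr[of "2*j+1" r] by simp
  have eb: "expd bs = map Inl [0..<2*(j+r)+1]" unfolding bs_def
    using arg_cong[OF L, of "map Inl"] b expd_Inr[of "2*j+1" r] by simp
  have nb: "nbr bs = j + r" unfolding bs_def using c nbr_Inr[of "2*j+1" r] by simp
  have "lhsC p q d X (j + r) j = SS p q d X (2*(j+r)+1) ([] @ bs)"
    unfolding lhsC_def SS_def bs_def by (simp add: o_def)
  also have "\<dots> = msmul (2 ^ (j+r)) (SS p q d X (2*(j+r)+1) ([] @ map Inl [0..<2*(j+r)+1]))"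
    using SS_expand[of "[]" bs "2*(j+r)+1" p q d X] pb eb nb by (simp add: atLeast0LessThan subset_eq)
  finally show ?thesis by (simp only: append_Nil SS_calA)
qed

theorem proposition4p1:
  fixes p q k :: nat and d :: "nat \<Rightarrow> bool" and X :: "nat \<Rightarrow> cmat"
  assumes "1 \<le> k"
    and "\<And>i. i < 2*k+1 \<Longrightarrow> homog p q (d i) (X i)"
  shows "Pm p q d X (2*k+1) = of_nat (2*k+1) * Bform p q (calP p q d X (2*k)) (X (2*k))
       \<and> Lam p q d X (2*k) = 0
       \<and> Lam p q d X (2*k+1) = of_nat (2*k+1) * Bform p q (calA p q d X (2*k)) (X (2*k))
       \<and> lhsB p q d X k = msmul (2^k) (calA p q d X (2*k))
       \<and> (\<forall>j\<le>k. lhsC p q d X k j = msmul (2^k) (calA p q d X (2*k+1)))"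
proof (intro conjI allI impI)
  have h: "\<And>i. i < Suc (2*k) \<Longrightarrow> homog p q (d i) (X i)" using assms(2) by simp
  show "Pm p q d X (2*k+1) = of_nat (2*k+1) * Bform p q (calP p q d X (2*k)) (X (2*k))"
    using partP[OF h] by simp
  show "Lam p q d X (2*k+1) = of_nat (2*k+1) * Bform p q (calA p q d X (2*k)) (X (2*k))"
    using partL[OF h] by simp
  show "Lam p q d X (2*k) = 0"
    by (rule partL0) (use assms in auto)
  show "lhsB p q d X k = msmul (2^k) (calA p q d X (2*k))" by (rule partB)
  fix j assume "j \<le> k"
  then obtain r where "k = j + r" using le_Suc_ex by blast
  then show "lhsC p q d X k j = msmul (2^k) (calA p q d X (2*k+1))" using partC[of p q d X j r] by simp
qed

end
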